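(* For every positive integer $n$, every feasible partition $w_1\le\dots\le w_m$ of $n$ and every $1\le i\le m$, one has $w_i\le 3^{i-1}$ and $R_i=w_1+\dots+w_i\le \frac{3^i-1}{2}$; these values are the highest possible, i.e. $3^{i-1}$ is the largest value the $i$-th part of any feasible partition can take, and $\frac{3^i-1}{2}$ is the largest positive integer whose feasible partitions have exactly $i$ parts.
   Context: A weighing partition of a positive integer $n$ is a multiset of positive integers summing to $n$ such that every integer $\ell$ with $1\le\ell\le n$ is a sum $\sum_j u_jw_j$ with $u_j\in\{-1,0,1\}$. A feasible partition of $n$ is a weighing partition of $n$ whose number of parts $m$ is minimal among all weighing partitions of $n$, written in nondecreasing order $w_1\le\dots\le w_m$. *)

theory Defs
  imports Main
begin

text \<open>A partition (multiset of positive integers) is represented by a list of its parts.\<close>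
definition weighing_partition :: "nat \<Rightarrow> nat list \<Rightarrow> bool" where
  "weighing_partition n ws \<longleftrightarrow>
     (\<forall>w\<in>set ws. 0 < w) \<and> sum_list ws = n \<and>
     (\<forall>l\<in>{1..n}. \<exists>u :: nat \<Rightarrow> int. (\<forall>j<length ws. u j \<in> {-1, 0, 1}) \<and>
        int l = (\<Sum>j<length ws. u j * int (ws ! j)))"

definition feasible_partition :: "nat \<Rightarrow> nat list \<Rightarrow> bool" where
  "feasible_partition n ws \<longleftrightarrow>
     sorted ws \<and> weighing_partition n ws \<and>
     (\<forall>vs. weighing_partition n vs \<longrightarrow> length ws \<le> length vs)"

end

theory Submission
  imports Defs
begin

lemma sum_nth_eq: "(\<Sum>k<length ws. int (ws ! k)) = int (sum_list ws)"
  by (simp add: sum_list_sum_nth atLeast0LessThan)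

lemma gap_lemma:
  assumes s: "sorted ws" and wp: "weighing_partition n ws" and i: "i < length ws"
  shows "ws ! i \<le> 2 * sum_list (take i ws) + 1"
proof (rule ccontr)
  assume "\<not> ?thesis"
  hence big: "ws ! i > 2 * sum_list (take i ws) + 1" by simp
  define S where "S = sum_list (take i ws)"
  define L where "L = sum_list (drop i ws)"
  have nSL: "n = S + L" using wp unfolding weighing_partition_def S_def L_def
    by (metis sum_list_append append_take_drop_id)
  have "L \<ge> ws ! i" unfolding L_def using i
    by (metis Cons_nth_drop_Suc le_add1 sum_list.Cons)
  hence L: "L \<ge> 2*S + 2" using big S_def by simp
  define v where "v = n - 2*S - 1"
  have v1: "v \<in> {1..n}" unfolding v_def using nSL L by auto
  then obtain u where u: "\<forall>j<length ws. u j \<in> {-1, 0, 1}"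
     and ueq: "int v = (\<Sum>j<length ws. u j * int (ws ! j))"
    using wp unfolding weighing_partition_def by blast
  have tot: "(\<Sum>k<length ws. int (ws ! k)) = int n"
    using wp sum_nth_eq unfolding weighing_partition_def by simp
  have le1: "\<And>k. k < length ws \<Longrightarrow> u k * int (ws ! k) \<le> int (ws ! k)"
  proof -
    fix k assume "k < length ws"
    with u have "u k \<in> {-1,0,1}" by blast
    thus "u k * int (ws ! k) \<le> int (ws ! k)" by auto
  qed
  have ge1: "\<And>k. k < length ws \<Longrightarrow> u k * int (ws ! k) \<ge> - int (ws ! k)"
  proof -
    fix k assume "k < length ws"
    with u have "u k \<in> {-1,0,1}" by blast
    thus "u k * int (ws ! k) \<ge> - int (ws ! k)" by auto
  qed
  show False
  proof (cases "\<exists>j. i \<le> j \<and> j < length ws \<and> u j \<noteq> 1")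
    case True
    then obtain j where j: "i \<le> j" "j < length ws" "u j \<noteq> 1" by blast
    have "u j \<in> {-1,0,1}" using u j by blast
    hence uj: "u j * int (ws ! j) \<le> 0" using j by auto
    have wj: "ws ! j \<ge> ws ! i" using s j by (simp add: sorted_iff_nth_mono)
    have fin: "finite {..<length ws}" by simp
    have jin: "j \<in> {..<length ws}" using j by simp
    have "(\<Sum>k<length ws. u k * int (ws ! k)) = u j * int (ws ! j) + (\<Sum>k\<in>{..<length ws} - {j}. u k * int (ws ! k))"
      using sum.remove[OF fin jin] by simp
    also have "\<dots> \<le> 0 + (\<Sum>k\<in>{..<length ws} - {j}. int (ws ! k))"
      using uj le1 by (intro add_mono sum_mono) auto
    also have "(\<Sum>k\<in>{..<length ws} - {j}. int (ws ! k)) = int n - int (ws ! j)"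
      using sum.remove[OF fin jin, of "\<lambda>k. int (ws ! k)"] tot by simp
    finally have "int v \<le> int n - int (ws ! i)" using ueq wj by simp
    thus False using v_def v1 big S_def by simp
  next
    case False
    hence all1: "\<forall>k. i \<le> k \<and> k < length ws \<longrightarrow> u k = 1" by blast
    have split: "{..<length ws} = {..<i} \<union> {i..<length ws}" using i by auto
    have "(\<Sum>k<length ws. u k * int (ws ! k)) = (\<Sum>k<i. u k * int (ws ! k)) + (\<Sum>k\<in>{i..<length ws}. u k * int (ws ! k))"
      unfolding split by (subst sum.union_disjoint) auto
    also have "(\<Sum>k\<in>{i..<length ws}. u k * int (ws ! k)) = (\<Sum>k\<in>{i..<length ws}. int (ws ! k))"
      using all1 by (intro sum.cong) auto
    also have "(\<Sum>k<i. u k * int (ws ! k)) \<ge> (\<Sum>k<i. - int (ws ! k))"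
      using ge1 i by (intro sum_mono) auto
    moreover have "(\<Sum>k<i. int (ws ! k)) = int S"
    proof -
      have "(\<Sum>k<i. int (ws ! k)) = (\<Sum>k<length (take i ws). int (take i ws ! k))"
        using i by (intro sum.cong) auto
      thus ?thesis using sum_nth_eq[of "take i ws"] S_def by (simp only:)
    qed
    moreover have "(\<Sum>k<length ws. int (ws ! k)) = (\<Sum>k<i. int (ws ! k)) + (\<Sum>k\<in>{i..<length ws}. int (ws ! k))"
      unfolding split by (subst sum.union_disjoint) auto
    ultimately have "int v \<ge> int n - 2 * int S" using ueq tot
      by (simp add: sum_negf)
    thus False using v_def v1 nSL L by simp
  qed
qed

lemma prefix_bound:
  assumes s: "sorted ws" and wp: "weighing_partition n ws"
  shows "k \<le> length ws \<Longrightarrow> 2 * sum_list (take k ws) + 1 \<le> 3 ^ k"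
proof (induction k)
  case 0 then show ?case by simp
next
  case (Suc k)
  hence k: "k < length ws" by simp
  have g: "ws ! k \<le> 2 * sum_list (take k ws) + 1" using gap_lemma[OF s wp k] .
  have "take (Suc k) ws = take k ws @ [ws ! k]" using k by (simp add: take_Suc_conv_app_nth)
  hence "sum_list (take (Suc k) ws) = sum_list (take k ws) + ws ! k" by simp
  with g Suc k show ?case by simp
qed

fun sset :: "nat list \<Rightarrow> int set" where
  "sset [] = {0}"
| "sset (w # ws) = (\<lambda>x. x - int w) ` sset ws \<union> sset ws \<union> (\<lambda>x. x + int w) ` sset ws"

lemma sset_card: "finite (sset ws) \<and> card (sset ws) \<le> 3 ^ length ws"
proof (induction ws)
  case Nil then show ?case by simp
next
  case (Cons w ws)
  let ?A = "(\<lambda>x. x - int w) ` sset ws" and ?B = "sset ws" and ?C = "(\<lambda>x. x + int w) ` sset ws"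
  have "card (?A \<union> ?B \<union> ?C) \<le> card (?A \<union> ?B) + card ?C"
    by (rule card_Un_le)
  moreover have "card (?A \<union> ?B) \<le> card ?A + card ?B" by (rule card_Un_le)
  moreover have "card ?A \<le> card ?B" "card ?C \<le> card ?B" by (auto intro: card_image_le simp: Cons)
  ultimately show ?case using Cons by auto
qed

lemma sset_zero: "0 \<in> sset ws"
  by (induction ws) auto

lemma sset_mem:
  "\<forall>u. (\<forall>j<length ws. u j \<in> {-1, 0, 1}) \<longrightarrow> (\<Sum>j<length ws. u j * int (ws ! j)) \<in> sset ws"
proof (induction ws)
  case Nil then show ?case by simp
next
  case (Cons w ws)
  show ?case
  proof (intro allI impI)
    fix u :: "nat \<Rightarrow> int" assume u: "\<forall>j<length (w # ws). u j \<in> {-1, 0, 1}"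
    have "(\<Sum>j<length (w#ws). u j * int ((w#ws) ! j)) = u 0 * int w + (\<Sum>j<length ws. u (Suc j) * int (ws ! j))"
      by (simp only: length_Cons sum.lessThan_Suc_shift) simp
    moreover have "(\<Sum>j<length ws. u (Suc j) * int (ws ! j)) \<in> sset ws"
      using Cons u by auto
    moreover have "u 0 \<in> {-1,0,1}" using u by auto
    ultimately show "(\<Sum>j<length (w#ws). u j * int ((w#ws) ! j)) \<in> sset (w # ws)"
      by (auto simp: algebra_simps)
  qed
qed

lemma count_bound:
  assumes wp: "weighing_partition n ws"
  shows "2 * n + 1 \<le> 3 ^ length ws"
proof -
  have sub: "{- int n..int n} \<subseteq> sset ws"
  proof
    fix l assume l: "l \<in> {- int n..int n}"
    show "l \<in> sset ws"
    proof (cases "l = 0")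
      case True
      show ?thesis using True sset_zero by simp
    next
      case False
      hence ln: "nat \<bar>l\<bar> \<in> {1..n}" using l by auto
      have W: "\<forall>l\<in>{1..n}. \<exists>u :: nat \<Rightarrow> int. (\<forall>j<length ws. u j \<in> {-1, 0, 1}) \<and>
        int l = (\<Sum>j<length ws. u j * int (ws ! j))"
        using wp unfolding weighing_partition_def by (elim conjE)
      obtain u where u: "\<forall>j<length ws. u j \<in> {-1, 0, 1}"
        and ueq: "int (nat \<bar>l\<bar>) = (\<Sum>j<length ws. u j * int (ws ! j))"
        using bspec[OF W ln] by (elim exE conjE)
      show ?thesis
      proof (cases "l > 0")
        case True
        have "(\<Sum>j<length ws. u j * int (ws ! j)) \<in> sset ws" using sset_mem[THEN spec, THEN mp, OF u] .
        thus ?thesis using ueq True by simp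
      next
        case False
        have u': "\<forall>j<length ws. (- u j) \<in> {-1, 0, 1}" using u by auto
        have "(\<Sum>j<length ws. (- u j) * int (ws ! j)) = - (\<Sum>j<length ws. u j * int (ws ! j))"
          by (simp add: sum_negf)
        moreover have "(\<Sum>j<length ws. (\<lambda>j. - u j) j * int (ws ! j)) \<in> sset ws"
          using sset_mem[THEN spec, THEN mp, OF u'] .
        ultimately have "- (\<Sum>j<length ws. u j * int (ws ! j)) \<in> sset ws" by simp
        moreover have "- (\<Sum>j<length ws. u j * int (ws ! j)) = l" using ueq False by simp
        ultimately show ?thesis by simp
      qed
    qed
  qed
  have "card {- int n..int n} \<le> card (sset ws)"
    using sub sset_card[of ws] by (intro card_mono) auto
  moreover have "card {- int n..int n} = 2 * n + 1" by simp
  ultimately show ?thesis using sset_card[of ws] by linarith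
qed

lemma ternary_rep:
  "\<forall>l::int. 2 * \<bar>l\<bar> + 1 \<le> 3 ^ i \<longrightarrow> (\<exists>u. (\<forall>j<i. u j \<in> {-1, 0, 1}) \<and> l = (\<Sum>j<i. u j * 3 ^ j))"
proof (induction i)
  case 0 then show ?case by auto
next
  case (Suc i)
  show ?case
  proof (intro allI impI)
    fix l :: int assume l: "2 * \<bar>l\<bar> + 1 \<le> 3 ^ Suc i"
    define d :: int where "d = (if 2 * l > 3 ^ i then 1 else if 2 * l < - (3 ^ i) then -1 else 0)"
    have "2 * \<bar>l - d * 3 ^ i\<bar> + 1 \<le> 3 ^ i"
    proof -
      have p: "(3::int) ^ Suc i = 3 * 3 ^ i" by simp
      have h1: "2*l+1 \<le> 3*3^i" "-2*l+1 \<le> 3*3^i"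
        using l p abs_ge_self[of l] abs_ge_minus_self[of l] by linarith+
      have q: "(3::int)^i > 0" by simp
      have "2 * (l - d * 3 ^ i) + 1 \<le> 3 ^ i \<and> 2 * (-(l - d * 3 ^ i)) + 1 \<le> 3 ^ i"
      proof -
        have "odd ((3::int)^i)" by simp
        then obtain k where k: "(3::int)^i = 2*k+1" by (elim oddE)
        show ?thesis unfolding d_def using h1 q k by (auto split: if_split)
      qed
      thus ?thesis by (simp add: abs_if)
    qed
    then obtain u where u: "\<forall>j<i. u j \<in> {-1, 0, 1}" and ueq: "l - d * 3 ^ i = (\<Sum>j<i. u j * 3 ^ j)"
      using Suc by blast
    define u' where "u' = u(i := d)"
    have "(\<Sum>j<Suc i. u' j * 3 ^ j) = (\<Sum>j<i. u' j * 3 ^ j) + d * 3 ^ i"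
      by (simp add: u'_def)
    also have "(\<Sum>j<i. u' j * 3 ^ j) = (\<Sum>j<i. u j * 3 ^ j)"
      by (intro sum.cong) (auto simp: u'_def)
    finally have "l = (\<Sum>j<Suc i. u' j * 3 ^ j)" using ueq by simp
    moreover have "\<forall>j<Suc i. u' j \<in> {-1, 0, 1}" using u unfolding u'_def d_def by auto
    ultimately show "\<exists>u. (\<forall>j<Suc i. u j \<in> {-1, 0, 1}) \<and> l = (\<Sum>j<Suc i. u j * 3 ^ j)" by blast
  qed
qed

definition ter :: "nat \<Rightarrow> nat list" where "ter i = map (\<lambda>j. 3 ^ j) [0..<i]"

lemma ter_sum: "2 * sum_list (ter i) + 1 = 3 ^ i"
  by (induction i) (auto simp: ter_def)

lemma ter_sum': "sum_list (ter i) = (3 ^ i - 1) div 2"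
  using ter_sum[of i] by simp

lemma ter_weighing: "weighing_partition ((3 ^ i - 1) div 2) (ter i)"
  unfolding weighing_partition_def
proof (intro conjI ballI)
  show "\<And>w. w \<in> set (ter i) \<Longrightarrow> 0 < w" by (auto simp: ter_def)
  show "sum_list (ter i) = (3 ^ i - 1) div 2" by (rule ter_sum')
  fix l :: nat assume l: "l \<in> {1..(3 ^ i - 1) div 2}"
  have "2 * \<bar>int l\<bar> + 1 \<le> 3 ^ i"
  proof -
    have "l \<le> sum_list (ter i)" using l ter_sum'[of i] by simp
    hence "2 * l + 1 \<le> (3::nat) ^ i" using ter_sum[of i] by linarith
    hence "int (2 * l + 1) \<le> int (3 ^ i)" by linarith
    thus ?thesis by simp
  qed
  then obtain u where u: "\<forall>j<i. u j \<in> {-1, 0, 1}" and ueq: "int l = (\<Sum>j<i. u j * 3 ^ j)"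
    using ternary_rep by blast
  have "(\<Sum>j<i. u j * 3 ^ j) = (\<Sum>j<length (ter i). u j * int (ter i ! j))"
    by (intro sum.cong) (auto simp: ter_def)
  thus "\<exists>u. (\<forall>j<length (ter i). u j \<in> {- 1, 0, 1}) \<and> int l = (\<Sum>j<length (ter i). u j * int (ter i ! j))"
    using u ueq by (auto simp: ter_def)
qed

lemma ter_feasible: "feasible_partition ((3 ^ i - 1) div 2) (ter i)"
  unfolding feasible_partition_def
proof (intro conjI allI impI)
  show "sorted (ter i)" by (auto simp: ter_def sorted_iff_nth_mono power_increasing)
  show "weighing_partition ((3 ^ i - 1) div 2) (ter i)" by (rule ter_weighing)
  fix vs assume "weighing_partition ((3 ^ i - 1) div 2) vs"
  from count_bound[OF this] have "(3::nat) ^ i \<le> 3 ^ length vs"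
    using ter_sum[of i] ter_sum'[of i] by simp
  hence "i \<le> length vs" by simp
  thus "length (ter i) \<le> length vs" by (simp add: ter_def)
qed

theorem theorem3:
  shows "(\<forall>n ws i. 0 < n \<longrightarrow> feasible_partition n ws \<longrightarrow> 1 \<le> i \<longrightarrow> i \<le> length ws \<longrightarrow>
            ws ! (i - 1) \<le> 3 ^ (i - 1) \<and> sum_list (take i ws) \<le> (3 ^ i - 1) div 2)
       \<and> (\<forall>i\<ge>1. \<exists>n ws. 0 < n \<and> feasible_partition n ws \<and> i \<le> length ws \<and>
            ws ! (i - 1) = 3 ^ (i - 1))
       \<and> (\<forall>i\<ge>1. (\<exists>ws. feasible_partition ((3 ^ i - 1) div 2) ws) \<and>
            (\<forall>ws. feasible_partition ((3 ^ i - 1) div 2) ws \<longrightarrow> length ws = i) \<and>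
            (\<forall>n ws. (3 ^ i - 1) div 2 < n \<longrightarrow> feasible_partition n ws \<longrightarrow> length ws \<noteq> i))"
proof (intro conjI allI impI)
  fix n ws i assume "0 < n" and f: "feasible_partition n ws" and i: "1 \<le> i" "i \<le> length ws"
  have s: "sorted ws" and wp: "weighing_partition n ws" using f unfolding feasible_partition_def by auto
  have a: "2 * sum_list (take i ws) + 1 \<le> 3 ^ i" using prefix_bound[OF s wp i(2)] .
  have b: "2 * sum_list (take (i - 1) ws) + 1 \<le> 3 ^ (i - 1)" using prefix_bound[OF s wp] i by simp
  have "ws ! (i - 1) \<le> 2 * sum_list (take (i - 1) ws) + 1" using gap_lemma[OF s wp] i by simp
  with b show "ws ! (i - 1) \<le> 3 ^ (i - 1)" by simp
  show "sum_list (take i ws) \<le> (3 ^ i - 1) div 2" using a by simp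
next
  fix i :: nat assume i: "1 \<le> i"
  have "0 < ((3::nat) ^ i - 1) div 2"
  proof -
    have "(3::nat) ^ 1 \<le> 3 ^ i" using i by (intro power_increasing) auto
    thus ?thesis by simp
  qed
  moreover have "ter i ! (i - 1) = 3 ^ (i - 1)" using i by (simp add: ter_def)
  moreover have "length (ter i) = i" by (simp add: ter_def)
  ultimately show "\<exists>n ws. 0 < n \<and> feasible_partition n ws \<and> i \<le> length ws \<and> ws ! (i - 1) = 3 ^ (i - 1)"
    using ter_feasible[of i] by (metis order_refl)
next
  fix i :: nat assume i: "1 \<le> i"
  show "\<exists>ws. feasible_partition ((3 ^ i - 1) div 2) ws" using ter_feasible by blast
next
  fix i :: nat and ws assume i: "1 \<le> i" and f: "feasible_partition ((3 ^ i - 1) div 2) ws"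
  have "length ws \<le> length (ter i)" using f ter_weighing unfolding feasible_partition_def by blast
  hence le: "length ws \<le> i" by (simp add: ter_def)
  have wp: "weighing_partition ((3 ^ i - 1) div 2) ws" using f unfolding feasible_partition_def by auto
  from count_bound[OF wp] have "(3::nat) ^ i \<le> 3 ^ length ws"
    using ter_sum[of i] ter_sum'[of i] by simp
  hence "i \<le> length ws" by simp
  with le show "length ws = i" by simp
next
  fix i n :: nat and ws assume i: "1 \<le> i" and lt: "(3 ^ i - 1) div 2 < n" and f: "feasible_partition n ws"
  have wp: "weighing_partition n ws" using f unfolding feasible_partition_def by auto
  show "length ws \<noteq> i"
  proof
    assume "length ws = i"
    with count_bound[OF wp] have "2 * n + 1 \<le> 3 ^ i" by simp
    thus False using lt ter_sum[of i] ter_sum'[of i] by simp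
  qed
qed

end
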